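(* For any real matrix $A\in\mathbf{R}^{2n\times 2m}$ there exists a unique bimatrix $\{A_1,A_2\}$ with $A_1,A_2\in\mathbf{C}^{n\times m}$ such that $\{A_1,A_2\}_\circ=A$. Moreover, $A_1$ and $A_2$ are given by $$\begin{bmatrix}A_1\\ A_2\end{bmatrix}=H_nAH_m^{\mathrm H}\begin{bmatrix}I_m\\ 0_{m\times m}\end{bmatrix}.$$
   Context: $P^{\#}$ and $P^{\mathrm H}$ denote entrywise conjugate and conjugate transpose; $\mathrm{j}$ is the imaginary unit. For $A_1,A_2\in\mathbf{C}^{n\times m}$ the bimatrix $\{A_1,A_2\}$ is the real-linear map $\mathbf{C}^m\to\mathbf{C}^n$, $x\mapsto A_1x+A_2^{\#}x^{\#}$; two bimatrices are equal iff they agree as maps (equivalently, iff the defining pairs coincide). Its real representation is $\{A_1,A_2\}_\circ=\begin{bmatrix}\mathrm{Re}(A_1+A_2) & -\mathrm{Im}(A_1+A_2)\\ \mathrm{Im}(A_1-A_2) & \mathrm{Re}(A_1-A_2)\end{bmatrix}\in\mathbf{R}^{2n\times 2m}$. For each $k$, $H_k=\frac{1}{\sqrt2}\begin{bmatrix}I_k & \mathrm{j}I_k\\ I_k & -\mathrm{j}I_k\end{bmatrix}$. *)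

theory Defs
  imports Complex_Main "Jordan_Normal_Form.Matrix"
begin

text \<open>A bimatrix {A1,A2} is represented by the pair (A1, A2) of complex n x m matrices;
  two bimatrices are equal iff the defining pairs coincide.\<close>

definition bimat_apply :: "complex mat \<times> complex mat \<Rightarrow> complex vec \<Rightarrow> complex vec" where
  "bimat_apply P x = fst P *\<^sub>v x + map_mat cnj (snd P) *\<^sub>v map_vec cnj x"

definition bimat_real_rep :: "complex mat \<times> complex mat \<Rightarrow> real mat" where
  "bimat_real_rep P = (let A1 = fst P; A2 = snd P in
     four_block_mat (map_mat Re (A1 + A2)) (map_mat (\<lambda>z. - Im z) (A1 + A2))
                    (map_mat Im (A1 - A2)) (map_mat Re (A1 - A2)))"

definition mat_cH :: "complex mat \<Rightarrow> complex mat" where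
  "mat_cH A = transpose_mat (map_mat cnj A)"

definition H_mat :: "nat \<Rightarrow> complex mat" where
  "H_mat k = (complex_of_real (1 / sqrt 2)) \<cdot>\<^sub>m
     four_block_mat (1\<^sub>m k) (\<i> \<cdot>\<^sub>m 1\<^sub>m k) (1\<^sub>m k) ((- \<i>) \<cdot>\<^sub>m 1\<^sub>m k)"

end

theory Submission
  imports Defs
begin

lemma rep_entries:
  assumes c1: "A1 \<in> carrier_mat n m" and c2: "A2 \<in> carrier_mat n m"
    and r: "bimat_real_rep (A1, A2) = A" and i: "i < n" and j: "j < m"
  shows "A $$ (i,j) = Re (A1 $$ (i,j) + A2 $$ (i,j))"
    "A $$ (i,j+m) = - Im (A1 $$ (i,j) + A2 $$ (i,j))"
    "A $$ (i+n,j) = Im (A1 $$ (i,j) - A2 $$ (i,j))"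
    "A $$ (i+n,j+m) = Re (A1 $$ (i,j) - A2 $$ (i,j))"
  using c1 c2 i j unfolding r[symmetric] bimat_real_rep_def Let_def by auto

lemma rep_carrier:
  assumes c1: "A1 \<in> carrier_mat n m" and c2: "A2 \<in> carrier_mat n m"
  shows "bimat_real_rep (A1, A2) \<in> carrier_mat (2*n) (2*m)"
  using c1 c2 unfolding bimat_real_rep_def Let_def by auto

lemma cH_E:
  "mat_cH (H_mat m) * (1\<^sub>m m @\<^sub>r 0\<^sub>m m m) =
   mat (2*m) m (\<lambda>(p,j). complex_of_real (1 / sqrt 2) *
      ((if p = j then 1 else 0) + (if p = j + m then - \<i> else 0)))"
proof (rule eq_matI)
  fix p j assume p: "p < dim_row (mat (2*m) m (\<lambda>(p,j). complex_of_real (1 / sqrt 2) *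
      ((if p = j then 1 else 0) + (if p = j + m then - \<i> else 0))))"
    and j: "j < dim_col (mat (2*m) m (\<lambda>(p,j). complex_of_real (1 / sqrt 2) *
      ((if p = j then 1 else 0) + (if p = j + m then - \<i> else 0))))"
  have p': "p < 2*m" and j': "j < m" using p j by auto
  have "(mat_cH (H_mat m) * (1\<^sub>m m @\<^sub>r 0\<^sub>m m m)) $$ (p,j)
     = (\<Sum>l<2*m. mat_cH (H_mat m) $$ (p,l) * (if l = j then 1 else 0))"
    using p' j' unfolding mat_cH_def H_mat_def append_rows_def
    by (auto simp: scalar_prod_def intro!: sum.cong)
  also have "\<dots> = mat_cH (H_mat m) $$ (p,j)"
    using j' by (simp add: if_distrib cong: if_cong)
  also have "\<dots> = complex_of_real (1 / sqrt 2) *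
      ((if p = j then 1 else 0) + (if p = j + m then - \<i> else 0))"
    using p' j' unfolding mat_cH_def H_mat_def by auto
  finally show "(mat_cH (H_mat m) * (1\<^sub>m m @\<^sub>r 0\<^sub>m m m)) $$ (p,j) =
     mat (2*m) m (\<lambda>(p,j). complex_of_real (1 / sqrt 2) *
      ((if p = j then 1 else 0) + (if p = j + m then - \<i> else 0))) $$ (p,j)"
    using p' j' by simp
qed (auto simp: mat_cH_def H_mat_def append_rows_def)

lemma AX:
  assumes A: "A \<in> carrier_mat (2*n) (2*m)"
  shows "map_mat complex_of_real A * (mat_cH (H_mat m) * (1\<^sub>m m @\<^sub>r 0\<^sub>m m m)) =
    mat (2*n) m (\<lambda>(k,j). complex_of_real (1 / sqrt 2) *
      (complex_of_real (A $$ (k,j)) - \<i> * complex_of_real (A $$ (k,j+m))))"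
proof (rule eq_matI)
  fix k j assume k: "k < dim_row (mat (2*n) m (\<lambda>(k,j). complex_of_real (1 / sqrt 2) *
      (complex_of_real (A $$ (k,j)) - \<i> * complex_of_real (A $$ (k,j+m)))))"
    and j: "j < dim_col (mat (2*n) m (\<lambda>(k,j). complex_of_real (1 / sqrt 2) *
      (complex_of_real (A $$ (k,j)) - \<i> * complex_of_real (A $$ (k,j+m)))))"
  have k': "k < 2*n" and j': "j < m" using k j by auto
  have "(map_mat complex_of_real A * (mat_cH (H_mat m) * (1\<^sub>m m @\<^sub>r 0\<^sub>m m m))) $$ (k,j)
    = (\<Sum>p<2*m. complex_of_real (A $$ (k,p)) * (complex_of_real (1 / sqrt 2) *
      ((if p = j then 1 else 0) + (if p = j + m then - \<i> else 0))))"
    using A k' j' unfolding cH_E by (auto simp: scalar_prod_def intro!: sum.cong)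
  also have "\<dots> = (\<Sum>p<2*m. complex_of_real (1 / sqrt 2) * (if p = j then complex_of_real (A $$ (k,p)) else 0))
      + (\<Sum>p<2*m. complex_of_real (1 / sqrt 2) * (if p = j + m then - \<i> * complex_of_real (A $$ (k,p)) else 0))"
    by (simp only: sum.distrib[symmetric], rule sum.cong) (auto simp: algebra_simps)
  also have "\<dots> = complex_of_real (1 / sqrt 2) *
      (complex_of_real (A $$ (k,j)) - \<i> * complex_of_real (A $$ (k,j+m)))"
    using j' by (simp only: sum_distrib_left[symmetric] sum.delta finite_lessThan lessThan_iff, simp add: algebra_simps)
  finally show "(map_mat complex_of_real A * (mat_cH (H_mat m) * (1\<^sub>m m @\<^sub>r 0\<^sub>m m m))) $$ (k,j) =
    mat (2*n) m (\<lambda>(k,j). complex_of_real (1 / sqrt 2) *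
      (complex_of_real (A $$ (k,j)) - \<i> * complex_of_real (A $$ (k,j+m)))) $$ (k,j)"
    using k' j' by simp
qed (use A in \<open>auto simp: cH_E\<close>)

lemma H_entry:
  assumes i: "i < 2*n" and k: "k < 2*n"
  shows "H_mat n $$ (i,k) = complex_of_real (1 / sqrt 2) *
    (if i < n then (if k = i then 1 else 0) + (if k = i + n then \<i> else 0)
     else (if k = i - n then 1 else 0) + (if k = i then - \<i> else 0))"
  using i k unfolding H_mat_def by auto

lemma HY:
  assumes Y: "Y \<in> carrier_mat (2*n) m" and i: "i < 2*n" and j: "j < m"
  shows "(H_mat n * Y) $$ (i,j) = complex_of_real (1 / sqrt 2) *
    (if i < n then Y $$ (i,j) + \<i> * Y $$ (i+n,j) else Y $$ (i-n,j) - \<i> * Y $$ (i,j))"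
proof -
  have dH: "dim_row (H_mat n) = 2*n" "dim_col (H_mat n) = 2*n" unfolding H_mat_def by auto
  have "(H_mat n * Y) $$ (i,j) = (\<Sum>k<2*n. H_mat n $$ (i,k) * Y $$ (k,j))"
    using Y i j dH by (simp add: scalar_prod_def lessThan_atLeast0)
  also have "\<dots> = (\<Sum>k<2*n. complex_of_real (1 / sqrt 2) *
    (if i < n then (if k = i then Y $$ (k,j) else 0) + (if k = i + n then \<i> * Y $$ (k,j) else 0)
     else (if k = i - n then Y $$ (k,j) else 0) + (if k = i then - \<i> * Y $$ (k,j) else 0)))"
    by (rule sum.cong) (use i in \<open>auto simp: H_entry algebra_simps\<close>)
  also have "\<dots> = complex_of_real (1 / sqrt 2) *
    (if i < n then Y $$ (i,j) + \<i> * Y $$ (i+n,j) else Y $$ (i-n,j) - \<i> * Y $$ (i,j))"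
    using i by (cases "i < n") (simp_all only: sum_distrib_left[symmetric] sum.distrib sum.delta
          finite_lessThan lessThan_iff if_True if_False, auto)
  finally show ?thesis .
qed

lemma half: "complex_of_real (1 / sqrt 2) * complex_of_real (1 / sqrt 2) = 1/2"
proof -
  have r: "(1 / sqrt 2) * (1 / sqrt 2) = (1/2::real)" by (simp add: divide_simps)
  have "complex_of_real (1 / sqrt 2) * complex_of_real (1 / sqrt 2) = complex_of_real (1/2)"
    by (simp only: of_real_mult[symmetric] r)
  then show ?thesis by simp
qed

lemma E_carrier: "(1\<^sub>m m @\<^sub>r 0\<^sub>m m m) \<in> carrier_mat (2*m) (m::nat)"
proof -
  have "(1\<^sub>m m @\<^sub>r 0\<^sub>m m m) \<in> carrier_mat (m+m) (m::nat)"
    by (rule carrier_append_rows) auto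
  then show ?thesis by (simp add: mult_2)
qed

lemma Z_carrier:
  assumes A: "A \<in> carrier_mat (2*n) (2*m)"
  shows "H_mat n * map_mat complex_of_real A * mat_cH (H_mat m) * (1\<^sub>m m @\<^sub>r 0\<^sub>m m m) \<in> carrier_mat (2*n) m"
proof -
  have H: "H_mat n \<in> carrier_mat (2*n) (2*n)" unfolding H_mat_def by auto
  have Ac: "map_mat complex_of_real A \<in> carrier_mat (2*n) (2*m)" using A by auto
  have C: "mat_cH (H_mat m) \<in> carrier_mat (2*m) (2*m)" unfolding H_mat_def mat_cH_def by auto
  show ?thesis using H Ac C E_carrier[of m] by (meson mult_carrier_mat)
qed

lemma Z_entry:
  assumes A: "A \<in> carrier_mat (2*n) (2*m)" and i: "i < 2*n" and j: "j < m"
  shows "(H_mat n * map_mat complex_of_real A * mat_cH (H_mat m) * (1\<^sub>m m @\<^sub>r 0\<^sub>m m m)) $$ (i,j)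
    = 1/2 * (if i < n then (complex_of_real (A $$ (i,j)) - \<i> * complex_of_real (A $$ (i,j+m)))
                         + \<i> * (complex_of_real (A $$ (i+n,j)) - \<i> * complex_of_real (A $$ (i+n,j+m)))
             else (complex_of_real (A $$ (i-n,j)) - \<i> * complex_of_real (A $$ (i-n,j+m)))
                         - \<i> * (complex_of_real (A $$ (i,j)) - \<i> * complex_of_real (A $$ (i,j+m))))"
proof -
  have H: "H_mat n \<in> carrier_mat (2*n) (2*n)" unfolding H_mat_def by auto
  have Ac: "map_mat complex_of_real A \<in> carrier_mat (2*n) (2*m)" using A by auto
  have C: "mat_cH (H_mat m) \<in> carrier_mat (2*m) (2*m)" unfolding H_mat_def mat_cH_def by auto
  have E: "(1\<^sub>m m @\<^sub>r 0\<^sub>m m m) \<in> carrier_mat (2*m) m" by (rule E_carrier)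
  have eq: "H_mat n * map_mat complex_of_real A * mat_cH (H_mat m) * (1\<^sub>m m @\<^sub>r 0\<^sub>m m m)
    = H_mat n * (map_mat complex_of_real A * (mat_cH (H_mat m) * (1\<^sub>m m @\<^sub>r 0\<^sub>m m m)))"
  proof -
    have "H_mat n * map_mat complex_of_real A * mat_cH (H_mat m) * (1\<^sub>m m @\<^sub>r 0\<^sub>m m m)
      = H_mat n * map_mat complex_of_real A * (mat_cH (H_mat m) * (1\<^sub>m m @\<^sub>r 0\<^sub>m m m))"
      by (rule assoc_mult_mat[OF mult_carrier_mat[OF H Ac] C E])
    also have "\<dots> = H_mat n * (map_mat complex_of_real A * (mat_cH (H_mat m) * (1\<^sub>m m @\<^sub>r 0\<^sub>m m m)))"
      by (rule assoc_mult_mat[OF H Ac mult_carrier_mat[OF C E]])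
    finally show ?thesis .
  qed
  let ?Y = "mat (2*n) m (\<lambda>(k,j). complex_of_real (1 / sqrt 2) *
      (complex_of_real (A $$ (k,j)) - \<i> * complex_of_real (A $$ (k,j+m))))"
  have Yc: "?Y \<in> carrier_mat (2*n) m" by simp
  show ?thesis unfolding eq AX[OF A] HY[OF Yc i j] using i j
    by (cases "i < n") (auto simp: algebra_simps half[symmetric])
qed

lemma formula:
  assumes c1: "A1 \<in> carrier_mat n m" and c2: "A2 \<in> carrier_mat n m"
    and r: "bimat_real_rep (A1, A2) = A"
  shows "A1 @\<^sub>r A2 = H_mat n * map_mat complex_of_real A * mat_cH (H_mat m) * (1\<^sub>m m @\<^sub>r 0\<^sub>m m m)"
proof -
  have A: "A \<in> carrier_mat (2*n) (2*m)" using rep_carrier[OF c1 c2] r by simp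
  note Zc = Z_carrier[OF A]
  have L: "A1 @\<^sub>r A2 \<in> carrier_mat (2*n) m"
  proof -
    have "A1 @\<^sub>r A2 \<in> carrier_mat (n+n) m" using c1 c2 by (rule carrier_append_rows)
    then show ?thesis by (simp add: mult_2)
  qed
  show ?thesis
  proof (rule eq_matI)
    fix i j assume "i < dim_row (H_mat n * map_mat complex_of_real A * mat_cH (H_mat m) * (1\<^sub>m m @\<^sub>r 0\<^sub>m m m))"
      "j < dim_col (H_mat n * map_mat complex_of_real A * mat_cH (H_mat m) * (1\<^sub>m m @\<^sub>r 0\<^sub>m m m))"
    then have i: "i < 2*n" and j: "j < m" using Zc by auto
    show "(A1 @\<^sub>r A2) $$ (i,j) = (H_mat n * map_mat complex_of_real A * mat_cH (H_mat m) * (1\<^sub>m m @\<^sub>r 0\<^sub>m m m)) $$ (i,j)"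
    proof (cases "i < n")
      case True
      note e = rep_entries[OF c1 c2 r True j]
      show ?thesis unfolding Z_entry[OF A i j] using True j c1 c2
        by (simp add: append_rows_def e complex_eq_iff algebra_simps)
    next
      case False
      then obtain i' where i': "i = i' + n" "i' < n" using i
        by (metis add.commute le_add_diff_inverse not_less mult_2 nat_add_left_cancel_less)
      note e = rep_entries[OF c1 c2 r i'(2) j]
      show ?thesis unfolding Z_entry[OF A i j] using i' j c1 c2
        by (simp add: append_rows_def e complex_eq_iff algebra_simps)
    qed
  qed (use Zc L in auto)
qed

lemma append_rows_inj:
  assumes "A1 \<in> carrier_mat n m" "A2 \<in> carrier_mat n m" "B1 \<in> carrier_mat n m" "B2 \<in> carrier_mat n m"
    and e: "A1 @\<^sub>r A2 = B1 @\<^sub>r B2"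
  shows "A1 = B1 \<and> A2 = B2"
proof -
  have "\<And>i j. i < n \<Longrightarrow> j < m \<Longrightarrow> (A1 @\<^sub>r A2) $$ (i,j) = A1 $$ (i,j) \<and> (A1 @\<^sub>r A2) $$ (i+n,j) = A2 $$ (i,j)
     \<and> (B1 @\<^sub>r B2) $$ (i,j) = B1 $$ (i,j) \<and> (B1 @\<^sub>r B2) $$ (i+n,j) = B2 $$ (i,j)"
    using assms(1-4) by (simp add: append_rows_def)
  then show ?thesis using assms(1-4) unfolding e by (auto intro!: eq_matI) metis+
qed

lemma existence:
  assumes A: "A \<in> carrier_mat (2*n) (2*m)"
  shows "bimat_real_rep
     (mat n m (\<lambda>(i,j). Complex ((A$$(i,j)+A$$(i+n,j+m))/2) ((A$$(i+n,j) - A$$(i,j+m))/2)),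
      mat n m (\<lambda>(i,j). Complex ((A$$(i,j)-A$$(i+n,j+m))/2) (-(A$$(i,j+m)+A$$(i+n,j))/2))) = A"
    (is "bimat_real_rep (?A1, ?A2) = A")
proof (rule eq_matI)
  fix i j assume "i < dim_row A" "j < dim_col A"
  then have i: "i < 2*n" and j: "j < 2*m" using A by auto
  show "bimat_real_rep (?A1, ?A2) $$ (i,j) = A $$ (i,j)"
  proof (cases "i < n")
    case True
    show ?thesis
    proof (cases "j < m")
      case True2: True
      show ?thesis using True True2 by (simp add: bimat_real_rep_def Let_def field_simps)
    next
      case False
      then obtain j' where j': "j = j' + m" "j' < m" using j
        by (metis add.commute le_add_diff_inverse not_less mult_2 nat_add_left_cancel_less)
      show ?thesis using True j' by (simp add: bimat_real_rep_def Let_def field_simps)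
    qed
  next
    case False
    then obtain i' where i': "i = i' + n" "i' < n" using i
      by (metis add.commute le_add_diff_inverse not_less mult_2 nat_add_left_cancel_less)
    show ?thesis
    proof (cases "j < m")
      case True2: True
      show ?thesis using i' True2 by (simp add: bimat_real_rep_def Let_def field_simps)
    next
      case False
      then obtain j' where j': "j = j' + m" "j' < m" using j
        by (metis add.commute le_add_diff_inverse not_less mult_2 nat_add_left_cancel_less)
      show ?thesis using i' j' by (simp add: bimat_real_rep_def Let_def field_simps)
    qed
  qed
qed (use A in \<open>auto simp: bimat_real_rep_def Let_def\<close>)

theorem lemma4:
  fixes n m :: nat and A :: "real mat"
  assumes "A \<in> carrier_mat (2 * n) (2 * m)"
  shows "(\<exists>!P. fst P \<in> carrier_mat n m \<and> snd P \<in> carrier_mat n m \<and> bimat_real_rep P = A)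
    \<and> (\<forall>A1 A2. A1 \<in> carrier_mat n m \<and> A2 \<in> carrier_mat n m \<and> bimat_real_rep (A1, A2) = A \<longrightarrow>
         A1 @\<^sub>r A2 = H_mat n * map_mat complex_of_real A * mat_cH (H_mat m)
                      * (1\<^sub>m m @\<^sub>r 0\<^sub>m m m))"
proof (intro conjI allI impI)
  show "\<exists>!P. fst P \<in> carrier_mat n m \<and> snd P \<in> carrier_mat n m \<and> bimat_real_rep P = A"
  proof (rule ex1I)
    show "fst (mat n m (\<lambda>(i,j). Complex ((A$$(i,j)+A$$(i+n,j+m))/2) ((A$$(i+n,j) - A$$(i,j+m))/2)),
      mat n m (\<lambda>(i,j). Complex ((A$$(i,j)-A$$(i+n,j+m))/2) (-(A$$(i,j+m)+A$$(i+n,j))/2))) \<in> carrier_mat n m \<and>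
      snd (mat n m (\<lambda>(i,j). Complex ((A$$(i,j)+A$$(i+n,j+m))/2) ((A$$(i+n,j) - A$$(i,j+m))/2)),
      mat n m (\<lambda>(i,j). Complex ((A$$(i,j)-A$$(i+n,j+m))/2) (-(A$$(i,j+m)+A$$(i+n,j))/2))) \<in> carrier_mat n m \<and>
      bimat_real_rep (mat n m (\<lambda>(i,j). Complex ((A$$(i,j)+A$$(i+n,j+m))/2) ((A$$(i+n,j) - A$$(i,j+m))/2)),
      mat n m (\<lambda>(i,j). Complex ((A$$(i,j)-A$$(i+n,j+m))/2) (-(A$$(i,j+m)+A$$(i+n,j))/2))) = A"
      using existence[OF assms] by simp
  next
    fix P assume P: "fst P \<in> carrier_mat n m \<and> snd P \<in> carrier_mat n m \<and> bimat_real_rep P = A"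
    let ?Q = "(mat n m (\<lambda>(i,j). Complex ((A$$(i,j)+A$$(i+n,j+m))/2) ((A$$(i+n,j) - A$$(i,j+m))/2)),
      mat n m (\<lambda>(i,j). Complex ((A$$(i,j)-A$$(i+n,j+m))/2) (-(A$$(i,j+m)+A$$(i+n,j))/2)))"
    have Q: "fst ?Q \<in> carrier_mat n m" "snd ?Q \<in> carrier_mat n m" "bimat_real_rep (fst ?Q, snd ?Q) = A"
      using existence[OF assms] by auto
    have P': "bimat_real_rep (fst P, snd P) = A" using P by simp
    have "fst P @\<^sub>r snd P = fst ?Q @\<^sub>r snd ?Q"
      using formula[OF conjunct1[OF P] conjunct1[OF conjunct2[OF P]] P'] formula[OF Q] by simp
    then have "fst P = fst ?Q \<and> snd P = snd ?Q"
      using append_rows_inj P Q by blast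
    then show "P = ?Q" by (simp add: prod_eq_iff)
  qed
next
  fix A1 A2 assume "A1 \<in> carrier_mat n m \<and> A2 \<in> carrier_mat n m \<and> bimat_real_rep (A1, A2) = A"
  then show "A1 @\<^sub>r A2 = H_mat n * map_mat complex_of_real A * mat_cH (H_mat m) * (1\<^sub>m m @\<^sub>r 0\<^sub>m m m)"
    using formula by blast
qed

end
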